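(* Let $\mathcal{A}=\{H_1,\dots,H_n\}$ be a central arrangement in $\mathbb{Q}^l$ with $H_i=\alpha_i^{-1}(0)$, where the $\alpha_i\in S_\mathbb{Z}=\mathbb{Z}[x_1,\dots,x_l]$ are linear forms such that no prime number divides any $\alpha_i$; regard it as the multiarrangement $(\mathcal{A},\mathbf{1})$ with all multiplicities $1$. Let $Q(\mathcal{A})=\prod_i\alpha_i$ and let $J(\mathcal{A})_\mathbb{Z}$ be the ideal of $S_\mathbb{Z}$ generated by $Q(\mathcal{A})$ and its partial derivatives $\partial Q(\mathcal{A})/\partial x_j$, $j=1,\dots,l$. Let $p$ be a good prime for $\mathcal{A}$. Then $p$ is a zero divisor of $S_\mathbb{Z}/J(\mathcal{A})_\mathbb{Z}$ if and only if $p$ is a zero divisor of $\operatorname{coker}(\varphi_\mathbb{Z})$.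
   Context: $\pi_p$ is reduction mod $p$ on $S_\mathbb{Z}$; $p$ is good if $\pi_p(\alpha_i)\ne\pi_p(\alpha_j)$ for all $i\ne j$. Let $M\subseteq S_\mathbb{Z}^n$ be the submodule generated by $\alpha_ie_i$, $i=1,\dots,n$, $A(\mathcal{A})=(\partial\alpha_i/\partial x_j)_{i,j}$, and $\varphi_\mathbb{Z}\colon S_\mathbb{Z}^l\to S_\mathbb{Z}^n/M$, $(g_1,\dots,g_l)^t\mapsto A(\mathcal{A})(g_1,\dots,g_l)^t$. $p$ is a zero divisor of an $S_\mathbb{Z}$-module $N$ if $pv=0$ for some nonzero $v\in N$. *)

theory Defs
  imports Complex_Main "HOL-Library.Poly_Mapping" "HOL-Computational_Algebra.Primes" "HOL-Number_Theory.Cong"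
begin

text \<open>S_Z = Z[x_j | j :: 'v], 'v a finite type of l = CARD('v) variables.
  Polynomials are finitely supported maps from monomials (exponent vectors) to int.\<close>
type_synonym 'v mpoly_int = "('v \<Rightarrow>\<^sub>0 nat) \<Rightarrow>\<^sub>0 int"

definition var :: "'v \<Rightarrow> 'v mpoly_int" where
  "var j = Poly_Mapping.single (Poly_Mapping.single j 1) 1"

definition const :: "int \<Rightarrow> 'v mpoly_int" where
  "const c = Poly_Mapping.single 0 c"

definition pderiv_mp :: "'v \<Rightarrow> 'v mpoly_int \<Rightarrow> 'v mpoly_int" where
  "pderiv_mp j f = (\<Sum>m\<in>Poly_Mapping.keys f. if Poly_Mapping.lookup m j = 0 then 0 else
      Poly_Mapping.single (m - Poly_Mapping.single j 1) (int (Poly_Mapping.lookup m j) * Poly_Mapping.lookup f m))"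

definition linform :: "('v::finite \<Rightarrow> int) \<Rightarrow> 'v mpoly_int" where
  "linform a = (\<Sum>j\<in>UNIV. const (a j) * var j)"

definition hyperplane :: "('v::finite \<Rightarrow> int) \<Rightarrow> ('v \<Rightarrow> rat) set" where
  "hyperplane a = {x. (\<Sum>j\<in>UNIV. of_int (a j) * x j) = 0}"

definition red_mod :: "int \<Rightarrow> ('v \<Rightarrow> int) \<Rightarrow> ('v \<Rightarrow> int)" where
  "red_mod p a = (\<lambda>j. a j mod p)"

definition good_prime :: "int \<Rightarrow> nat \<Rightarrow> (nat \<Rightarrow> 'v \<Rightarrow> int) \<Rightarrow> bool" where
  "good_prime p n a \<longleftrightarrow> prime p \<and> (\<forall>i<n. \<forall>k<n. i \<noteq> k \<longrightarrow> red_mod p (a i) \<noteq> red_mod p (a k))"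

definition defpoly :: "nat \<Rightarrow> (nat \<Rightarrow> 'v::finite \<Rightarrow> int) \<Rightarrow> 'v mpoly_int" where
  "defpoly n a = (\<Prod>i<n. linform (a i))"

definition jac_ideal :: "nat \<Rightarrow> (nat \<Rightarrow> 'v::finite \<Rightarrow> int) \<Rightarrow> 'v mpoly_int set" where
  "jac_ideal n a = {c * defpoly n a + (\<Sum>j\<in>UNIV. d j * pderiv_mp j (defpoly n a)) | c d. True}"

definition zero_divisor_quot :: "int \<Rightarrow> 'v mpoly_int set \<Rightarrow> bool" where
  "zero_divisor_quot p I \<longleftrightarrow> (\<exists>f. f \<notin> I \<and> const p * f \<in> I)"

text \<open>Vectors of S_Z^n are functions nat => S_Z, only components i < n matter.
  The submodule M + im(A(A)) of S_Z^n, where M is generated by alpha_i e_i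
  and A(A)_{ij} = d alpha_i / d x_j.  coker(phi_Z) = S_Z^n / (M + im A).\<close>
definition coker_rel :: "nat \<Rightarrow> (nat \<Rightarrow> 'v::finite \<Rightarrow> int) \<Rightarrow> (nat \<Rightarrow> 'v mpoly_int) set" where
  "coker_rel n a = {u. \<exists>h g. \<forall>i<n.
      u i = h i * linform (a i) + (\<Sum>j\<in>UNIV. pderiv_mp j (linform (a i)) * g j)}"

definition zero_divisor_coker :: "int \<Rightarrow> nat \<Rightarrow> (nat \<Rightarrow> 'v::finite \<Rightarrow> int) \<Rightarrow> bool" where
  "zero_divisor_coker p n a \<longleftrightarrow>
     (\<exists>v. v \<notin> coker_rel n a \<and> (\<lambda>i. const p * v i) \<in> coker_rel n a)"

end

theory Submission
  imports Defs
begin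

lemma const_add: "const (a + b) = (const a + const b :: 'v mpoly_int)"
  by (simp add: const_def single_add)
lemma const_mult: "const (a * b) = (const a * const b :: 'v mpoly_int)"
  by (simp add: const_def mult_single)
lemma const_0[simp]: "const 0 = (0 :: 'v mpoly_int)"
  by (simp add: const_def)
lemma const_1[simp]: "const 1 = (1 :: 'v mpoly_int)"
  by (simp add: const_def)
lemma const_uminus: "const (- a) = (- const a :: 'v mpoly_int)"
  by (simp add: const_def single_uminus)
lemma const_diff: "const (a - b) = (const a - const b :: 'v mpoly_int)"
  by (simp add: const_def single_diff)

lemma lookup_const_mult: "Poly_Mapping.lookup (const c * X) m = c * Poly_Mapping.lookup X m"
proof -
  have "const c * X = Poly_Mapping.map ((*) c) X"
    by (simp add: const_def mult_map_scale_conv_mult)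
  then show ?thesis by (simp add: map.rep_eq when_def)
qed

lemma const_dvd_iff: "const q dvd (X :: 'v mpoly_int) \<longleftrightarrow> (\<forall>m. q dvd Poly_Mapping.lookup X m)"
proof
  assume "const q dvd X"
  then obtain Y where "X = const q * Y" by (auto elim: dvdE)
  then show "\<forall>m. q dvd Poly_Mapping.lookup X m" by (simp add: lookup_const_mult)
next
  assume H: "\<forall>m. q dvd Poly_Mapping.lookup X m"
  define Y where "Y = Poly_Mapping.map (\<lambda>c. c div q) X"
  have "Poly_Mapping.lookup (const q * Y) k = Poly_Mapping.lookup X k" for k
    using H by (simp add: lookup_const_mult Y_def map.rep_eq when_def dvd_mult_div_cancel)
  then have "const q * Y = X" by (rule poly_mapping_eqI)
  then show "const q dvd X" by (metis dvd_triv_left)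
qed

lemma poly_sum_monoms: "X = (\<Sum>m\<in>Poly_Mapping.keys X. Poly_Mapping.single m (Poly_Mapping.lookup X m))"
proof (rule poly_mapping_eqI)
  fix k
  show "Poly_Mapping.lookup X k = Poly_Mapping.lookup (\<Sum>m\<in>Poly_Mapping.keys X. Poly_Mapping.single m (Poly_Mapping.lookup X m)) k"
    by (simp add: lookup_sum lookup_single when_def in_keys_iff)
qed

lemma poly_sum_monoms_superset:
  assumes "finite K" "Poly_Mapping.keys X \<subseteq> K"
  shows "X = (\<Sum>m\<in>K. Poly_Mapping.single m (Poly_Mapping.lookup X m))"
proof -
  have "(\<Sum>m\<in>K. Poly_Mapping.single m (Poly_Mapping.lookup X m)) = (\<Sum>m\<in>Poly_Mapping.keys X. Poly_Mapping.single m (Poly_Mapping.lookup X m))"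
    by (rule sum.mono_neutral_right) (use assms in \<open>auto simp: in_keys_iff\<close>)
  then show ?thesis using poly_sum_monoms by metis
qed

lemma lookup_mult_sum:
  "Poly_Mapping.lookup ((X::'v mpoly_int) * Y) k =
    (\<Sum>a\<in>Poly_Mapping.keys X. \<Sum>b\<in>Poly_Mapping.keys Y. if a + b = k then Poly_Mapping.lookup X a * Poly_Mapping.lookup Y b else 0)"
proof -
  have "X * Y = (\<Sum>a\<in>Poly_Mapping.keys X. Poly_Mapping.single a (Poly_Mapping.lookup X a)) * (\<Sum>b\<in>Poly_Mapping.keys Y. Poly_Mapping.single b (Poly_Mapping.lookup Y b))"
    using poly_sum_monoms by metis
  also have "\<dots> = (\<Sum>a\<in>Poly_Mapping.keys X. \<Sum>b\<in>Poly_Mapping.keys Y. Poly_Mapping.single (a + b) (Poly_Mapping.lookup X a * Poly_Mapping.lookup Y b))"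
    by (simp only: sum_product mult_single)
  finally show ?thesis
    by (simp add: lookup_sum lookup_single when_def)
qed


abbreviation "dl j \<equiv> (Poly_Mapping.single j (1::nat) :: 'v \<Rightarrow>\<^sub>0 nat)"

definition dterm :: "'v \<Rightarrow> ('v \<Rightarrow>\<^sub>0 nat) \<Rightarrow> int \<Rightarrow> 'v mpoly_int" where
  "dterm j m c = (if Poly_Mapping.lookup m j = 0 then 0 else Poly_Mapping.single (m - dl j) (int (Poly_Mapping.lookup m j) * c))"

lemma dterm_0[simp]: "dterm j m 0 = 0" by (simp add: dterm_def)
lemma dterm_add: "dterm j m (c + d) = dterm j m c + dterm j m d"
  by (simp add: dterm_def distrib_left single_add)

lemma pderiv_dterm: "pderiv_mp j f = (\<Sum>m\<in>Poly_Mapping.keys f. dterm j m (Poly_Mapping.lookup f m))"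
  by (simp add: pderiv_mp_def dterm_def)

lemma pderiv_superset:
  assumes "finite K" "Poly_Mapping.keys f \<subseteq> K"
  shows "pderiv_mp j f = (\<Sum>m\<in>K. dterm j m (Poly_Mapping.lookup f m))"
  unfolding pderiv_dterm
  by (rule sum.mono_neutral_left) (use assms in \<open>auto simp: in_keys_iff\<close>)

lemma pderiv_add: "pderiv_mp j (f + g) = pderiv_mp j f + pderiv_mp j g"
proof -
  let ?K = "Poly_Mapping.keys f \<union> Poly_Mapping.keys g"
  have "Poly_Mapping.keys (f + g) \<subseteq> ?K" by (rule keys_add)
  then have "pderiv_mp j (f + g) = (\<Sum>m\<in>?K. dterm j m (Poly_Mapping.lookup (f+g) m))"
    by (intro pderiv_superset) auto
  also have "\<dots> = (\<Sum>m\<in>?K. dterm j m (Poly_Mapping.lookup f m)) + (\<Sum>m\<in>?K. dterm j m (Poly_Mapping.lookup g m))"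
    by (simp add: lookup_add dterm_add sum.distrib)
  also have "\<dots> = pderiv_mp j f + pderiv_mp j g"
    by (subst (1 2) pderiv_superset[where K="?K"]) auto
  finally show ?thesis .
qed

lemma pderiv_0[simp]: "pderiv_mp j 0 = 0"
  by (simp add: pderiv_mp_def)

lemma pderiv_sum: "pderiv_mp j (\<Sum>i\<in>I. F i) = (\<Sum>i\<in>I. pderiv_mp j (F i))"
  by (induction I rule: infinite_finite_induct) (auto simp: pderiv_add)

lemma pderiv_single: "pderiv_mp j (Poly_Mapping.single m c) = dterm j m c"
  by (cases "c = 0") (auto simp: pderiv_dterm)

lemma pderiv_uminus: "pderiv_mp j (- f) = - pderiv_mp j f"
proof -
  have "pderiv_mp j f + pderiv_mp j (- f) = 0" using pderiv_add[of j f "-f"] by simp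
  then show ?thesis by (metis minus_unique)
qed

lemma pderiv_diff: "pderiv_mp j (f - g) = pderiv_mp j f - pderiv_mp j g"
  using pderiv_add[of j f "-g"] by (simp add: pderiv_uminus)

lemma minus_dl_add:
  assumes "Poly_Mapping.lookup a j \<noteq> 0"
  shows "a - dl j + b = a + b - dl j"
  by (rule poly_mapping_eqI) (use assms in \<open>auto simp: lookup_add lookup_minus lookup_single when_def\<close>)

lemma dterm_alt: "dterm j m c = Poly_Mapping.single (m - dl j) (int (Poly_Mapping.lookup m j) * c)"
  by (simp add: dterm_def)

lemma dterm_mult:
  "dterm j (a + b) (c * d) = dterm j a c * Poly_Mapping.single b d + Poly_Mapping.single a c * dterm j b d"
proof -
  have t1: "Poly_Mapping.single (a + b - dl j) (int (Poly_Mapping.lookup a j) * c * d) =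
      Poly_Mapping.single (a - dl j + b) (int (Poly_Mapping.lookup a j) * c * d)"
  proof (cases "Poly_Mapping.lookup a j = 0")
    case False
    then have "a - dl j + b = a + b - dl j" by (rule minus_dl_add)
    then show ?thesis by simp
  qed simp
  have t2: "Poly_Mapping.single (a + b - dl j) (int (Poly_Mapping.lookup b j) * c * d) =
      Poly_Mapping.single (a + (b - dl j)) (int (Poly_Mapping.lookup b j) * c * d)"
  proof (cases "Poly_Mapping.lookup b j = 0")
    case False
    then have "b - dl j + a = b + a - dl j" by (rule minus_dl_add)
    then show ?thesis by (simp add: add.commute)
  qed simp
  have "dterm j (a + b) (c * d) = Poly_Mapping.single (a + b - dl j) (int (Poly_Mapping.lookup a j) * c * d)
      + Poly_Mapping.single (a + b - dl j) (int (Poly_Mapping.lookup b j) * c * d)"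
    by (simp add: dterm_alt lookup_add distrib_right single_add mult.assoc)
  also have "\<dots> = dterm j a c * Poly_Mapping.single b d + Poly_Mapping.single a c * dterm j b d"
    unfolding t1 t2 by (simp add: dterm_alt mult_single algebra_simps)
  finally show ?thesis .
qed

lemma pderiv_mult: "pderiv_mp j (f * g) = pderiv_mp j f * g + f * pderiv_mp j g"
proof -
  define F where "F = (\<Sum>a\<in>Poly_Mapping.keys f. Poly_Mapping.single a (Poly_Mapping.lookup f a))"
  define G where "G = (\<Sum>b\<in>Poly_Mapping.keys g. Poly_Mapping.single b (Poly_Mapping.lookup g b))"
  have Ff: "F = f" unfolding F_def by (rule poly_sum_monoms[symmetric])
  have Gg: "G = g" unfolding G_def by (rule poly_sum_monoms[symmetric])
  have FG: "F * G = (\<Sum>a\<in>Poly_Mapping.keys f. \<Sum>b\<in>Poly_Mapping.keys g. Poly_Mapping.single (a + b) (Poly_Mapping.lookup f a * Poly_Mapping.lookup g b))"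
    unfolding F_def G_def by (simp only: sum_product mult_single)
  have dF: "pderiv_mp j F = (\<Sum>a\<in>Poly_Mapping.keys f. dterm j a (Poly_Mapping.lookup f a))"
    unfolding F_def by (simp only: pderiv_sum pderiv_single)
  have dG: "pderiv_mp j G = (\<Sum>b\<in>Poly_Mapping.keys g. dterm j b (Poly_Mapping.lookup g b))"
    unfolding G_def by (simp only: pderiv_sum pderiv_single)
  have "pderiv_mp j (F * G) = pderiv_mp j F * G + F * pderiv_mp j G"
    unfolding FG dF dG unfolding F_def G_def
    by (simp only: pderiv_sum pderiv_single sum_product dterm_mult sum.distrib)
  then show ?thesis unfolding Ff Gg .
qed

lemma pderiv_const[simp]: "pderiv_mp j (const c) = 0"
  by (simp add: const_def pderiv_single dterm_def)

lemma pderiv_const_mult: "pderiv_mp j (const c * f) = const c * pderiv_mp j f"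
  by (simp add: pderiv_mult)

lemma pderiv_var: "pderiv_mp j (var i) = (if i = j then 1 else 0)"
  by (simp add: var_def pderiv_single dterm_def lookup_single when_def)

lemma pderiv_linform: "pderiv_mp j (linform a) = const (a j)"
proof -
  have "pderiv_mp j (linform a) = (\<Sum>i\<in>UNIV. const (a i) * (if i = j then 1 else 0))"
    by (simp add: linform_def pderiv_sum pderiv_const_mult pderiv_var)
  also have "\<dots> = (\<Sum>i\<in>UNIV. if i = j then const (a i) else 0)"
    by (rule sum.cong) auto
  also have "\<dots> = const (a j)" by simp
  finally show ?thesis .
qed

lemma pderiv_1[simp]: "pderiv_mp j 1 = 0"
  by (simp add: pderiv_mp_def)

lemma pderiv_prod:
  "finite I \<Longrightarrow> pderiv_mp j (\<Prod>i\<in>I. F i) = (\<Sum>i\<in>I. pderiv_mp j (F i) * (\<Prod>k\<in>I - {i}. F k))"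
proof (induction I rule: finite_induct)
  case empty
  then show ?case by simp
next
  case (insert x I)
  have pr: "(\<Prod>k\<in>insert x I - {i}. F k) = F x * (\<Prod>k\<in>I - {i}. F k)" if "i \<in> I" for i
  proof -
    have "insert x I - {i} = insert x (I - {i})" using that insert by auto
    then show ?thesis using insert by simp
  qed
  have px: "(\<Prod>k\<in>insert x I - {x}. F k) = (\<Prod>k\<in>I. F k)"
    using insert by simp
  have "pderiv_mp j (\<Prod>i\<in>insert x I. F i) = pderiv_mp j (F x) * (\<Prod>i\<in>I. F i) + F x * pderiv_mp j (\<Prod>i\<in>I. F i)"
    using insert by (simp add: pderiv_mult)
  also have "F x * pderiv_mp j (\<Prod>i\<in>I. F i) = (\<Sum>i\<in>I. pderiv_mp j (F i) * (F x * (\<Prod>k\<in>I - {i}. F k)))"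
    using insert.IH by (simp add: sum_distrib_left mult.left_commute)
  also have "\<dots> = (\<Sum>i\<in>I. pderiv_mp j (F i) * (\<Prod>k\<in>insert x I - {i}. F k))"
    by (rule sum.cong) (simp_all add: pr)
  also have "pderiv_mp j (F x) * (\<Prod>i\<in>I. F i) = pderiv_mp j (F x) * (\<Prod>k\<in>insert x I - {x}. F k)"
    by (simp only: px)
  also have "pderiv_mp j (F x) * (\<Prod>k\<in>insert x I - {x}. F k) + (\<Sum>i\<in>I. pderiv_mp j (F i) * (\<Prod>k\<in>insert x I - {i}. F k))
     = (\<Sum>i\<in>insert x I. pderiv_mp j (F i) * (\<Prod>k\<in>insert x I - {i}. F k))"
    by (rule sum.insert[OF insert.hyps(1,2), symmetric])
  finally show ?case .
qed


definition monom :: "('v::finite \<Rightarrow> 'v mpoly_int) \<Rightarrow> ('v \<Rightarrow>\<^sub>0 nat) \<Rightarrow> 'v mpoly_int" where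
  "monom s m = (\<Prod>v\<in>UNIV. s v ^ Poly_Mapping.lookup m v)"

definition psubst :: "('v::finite \<Rightarrow> 'v mpoly_int) \<Rightarrow> 'v mpoly_int \<Rightarrow> 'v mpoly_int" where
  "psubst s X = (\<Sum>m\<in>Poly_Mapping.keys X. const (Poly_Mapping.lookup X m) * monom s m)"

lemma mono_0[simp]: "monom s 0 = 1" by (simp add: monom_def)
lemma mono_add: "monom s (a + b) = monom s a * monom s b"
  by (simp add: monom_def lookup_add power_add prod.distrib)

lemma subst_superset:
  assumes "finite K" "Poly_Mapping.keys X \<subseteq> K"
  shows "psubst s X = (\<Sum>m\<in>K. const (Poly_Mapping.lookup X m) * monom s m)"
  unfolding psubst_def
  by (rule sum.mono_neutral_left) (use assms in \<open>auto simp: in_keys_iff\<close>)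

lemma subst_add: "psubst s (X + Y) = psubst s X + psubst s Y"
proof -
  let ?K = "Poly_Mapping.keys X \<union> Poly_Mapping.keys Y"
  have "Poly_Mapping.keys (X + Y) \<subseteq> ?K" by (rule keys_add)
  then have "psubst s (X + Y) = (\<Sum>m\<in>?K. const (Poly_Mapping.lookup (X+Y) m) * monom s m)"
    by (intro subst_superset) auto
  also have "\<dots> = (\<Sum>m\<in>?K. const (Poly_Mapping.lookup X m) * monom s m) + (\<Sum>m\<in>?K. const (Poly_Mapping.lookup Y m) * monom s m)"
    by (simp add: lookup_add const_add sum.distrib distrib_right)
  also have "\<dots> = psubst s X + psubst s Y"
    by (subst (1 2) subst_superset[where K="?K"]) auto
  finally show ?thesis .
qed

lemma subst_0[simp]: "psubst s 0 = 0" by (simp add: psubst_def)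

lemma subst_sum: "psubst s (\<Sum>i\<in>I. F i) = (\<Sum>i\<in>I. psubst s (F i))"
  by (induction I rule: infinite_finite_induct) (auto simp: subst_add)

lemma subst_single: "psubst s (Poly_Mapping.single m c) = const c * monom s m"
  by (cases "c = 0") (auto simp: psubst_def)

lemma subst_uminus: "psubst s (- X) = - psubst s X"
proof -
  have "psubst s X + psubst s (- X) = 0" using subst_add[of s X "-X"] by simp
  then show ?thesis by (metis minus_unique)
qed

lemma subst_diff: "psubst s (X - Y) = psubst s X - psubst s Y"
  using subst_add[of s X "-Y"] by (simp add: subst_uminus)

lemma subst_mult: "psubst s (X * Y) = psubst s X * psubst s Y"
proof -
  have "X * Y = (\<Sum>a\<in>Poly_Mapping.keys X. Poly_Mapping.single a (Poly_Mapping.lookup X a)) * (\<Sum>b\<in>Poly_Mapping.keys Y. Poly_Mapping.single b (Poly_Mapping.lookup Y b))"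
    using poly_sum_monoms by metis
  also have "\<dots> = (\<Sum>a\<in>Poly_Mapping.keys X. \<Sum>b\<in>Poly_Mapping.keys Y. Poly_Mapping.single (a + b) (Poly_Mapping.lookup X a * Poly_Mapping.lookup Y b))"
    by (simp only: sum_product mult_single)
  finally have "psubst s (X * Y) = (\<Sum>a\<in>Poly_Mapping.keys X. \<Sum>b\<in>Poly_Mapping.keys Y. const (Poly_Mapping.lookup X a * Poly_Mapping.lookup Y b) * monom s (a + b))"
    by (simp add: subst_sum subst_single)
  also have "\<dots> = (\<Sum>a\<in>Poly_Mapping.keys X. const (Poly_Mapping.lookup X a) * monom s a) * (\<Sum>b\<in>Poly_Mapping.keys Y. const (Poly_Mapping.lookup Y b) * monom s b)"
    unfolding sum_product by (simp add: const_mult mono_add mult_ac)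
  finally show ?thesis by (simp add: psubst_def)
qed

lemma subst_const[simp]: "psubst s (const c) = const c"
  by (simp add: const_def subst_single)

lemma subst_1[simp]: "psubst s 1 = 1"
  using subst_const[of s 1] by simp

lemma subst_var[simp]: "psubst s (var v) = s v"
proof -
  have "monom s (dl v) = (\<Prod>w\<in>UNIV. if w = v then s w else 1)"
    unfolding monom_def by (rule prod.cong) (auto simp: lookup_single when_def)
  also have "\<dots> = s v" by simp
  finally show ?thesis by (simp add: var_def subst_single)
qed

lemma subst_prod: "psubst s (\<Prod>i\<in>I. F i) = (\<Prod>i\<in>I. psubst s (F i))"
  by (induction I rule: infinite_finite_induct) (auto simp: subst_mult)

lemma subst_power: "psubst s (X ^ k) = psubst s X ^ k"
  by (induction k) (auto simp: subst_mult)

lemma subst_mono: "psubst s (monom t m) = monom (\<lambda>v. psubst s (t v)) m"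
  by (simp add: monom_def subst_prod subst_power)

lemma subst_comp: "psubst s (psubst t X) = psubst (\<lambda>v. psubst s (t v)) X"
proof -
  have "psubst s (psubst t X) = (\<Sum>m\<in>Poly_Mapping.keys X. const (Poly_Mapping.lookup X m) * psubst s (monom t m))"
    by (simp only: psubst_def[of t X] subst_sum subst_mult subst_const)
  also have "\<dots> = psubst (\<lambda>v. psubst s (t v)) X"
    by (simp only: subst_mono psubst_def[of "\<lambda>v. psubst s (t v)" X])
  finally show ?thesis .
qed

lemma single_dl_power: "Poly_Mapping.single (dl v) (1::int) ^ k = Poly_Mapping.single (Poly_Mapping.single v k) 1"
  by (induction k) (auto simp: mult_single single_add[symmetric] add.commute)

lemma sum_single_lookup: "(\<Sum>v\<in>UNIV. Poly_Mapping.single v (Poly_Mapping.lookup m v)) = (m :: 'v::finite \<Rightarrow>\<^sub>0 nat)"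
  by (rule poly_mapping_eqI) (simp add: lookup_sum lookup_single when_def)

lemma prod_single_one: "finite I \<Longrightarrow> (\<Prod>i\<in>I. Poly_Mapping.single (f i) (1::int)) = Poly_Mapping.single (\<Sum>i\<in>I. f i) 1"
  by (induction I rule: finite_induct) (auto simp: mult_single)

lemma mono_var: "monom var m = Poly_Mapping.single m 1"
proof -
  have "monom var m = (\<Prod>v\<in>UNIV. Poly_Mapping.single (Poly_Mapping.single v (Poly_Mapping.lookup m v)) (1::int))"
    unfolding monom_def var_def by (rule prod.cong[OF refl], rule single_dl_power)
  also have "\<dots> = Poly_Mapping.single m 1"
    by (simp add: prod_single_one sum_single_lookup)
  finally show ?thesis .
qed

lemma subst_id: "psubst var X = X"
proof -
  have "psubst var X = (\<Sum>m\<in>Poly_Mapping.keys X. Poly_Mapping.single m (Poly_Mapping.lookup X m))"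
    by (simp add: psubst_def mono_var const_def mult_single)
  then show ?thesis using poly_sum_monoms by metis
qed

lemma subst_linform: "psubst s (linform a) = (\<Sum>j\<in>UNIV. const (a j) * s j)"
  by (simp add: linform_def subst_sum subst_mult)

lemma dvd_power_diff': "(c::'a::comm_ring_1) dvd (x - y) \<Longrightarrow> c dvd (x ^ k - y ^ k)"
proof (induction k)
  case (Suc k)
  have "x ^ Suc k - y ^ Suc k = x * (x ^ k - y ^ k) + y ^ k * (x - y)"
    by (simp add: algebra_simps)
  then show ?case using Suc by simp
qed simp

lemma dvd_prod_diff': "finite I \<Longrightarrow> (\<And>i. i \<in> I \<Longrightarrow> (c::'a::comm_ring_1) dvd (A i - B i)) \<Longrightarrow>
   c dvd ((\<Prod>i\<in>I. A i) - (\<Prod>i\<in>I. B i))"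
proof (induction I rule: finite_induct)
  case (insert x F)
  have "(\<Prod>i\<in>insert x F. A i) - (\<Prod>i\<in>insert x F. B i) =
     A x * ((\<Prod>i\<in>F. A i) - (\<Prod>i\<in>F. B i)) + (\<Prod>i\<in>F. B i) * (A x - B x)"
    using insert by (simp add: algebra_simps)
  then show ?case using insert by simp
qed simp

lemma subst_cong_dvd:
  assumes "\<And>v. c dvd (s v - var v)"
  shows "c dvd (psubst s X - X)"
proof -
  have "psubst s X - X = psubst s X - psubst var X" by (simp add: subst_id)
  also have "\<dots> = (\<Sum>m\<in>Poly_Mapping.keys X. const (Poly_Mapping.lookup X m) * (monom s m - monom var m))"
    by (simp add: psubst_def sum_subtractf right_diff_distrib)
  finally have eq: "psubst s X - X = \<dots>" .
  have "c dvd (monom s m - monom var m)" for m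
    unfolding monom_def by (rule dvd_prod_diff') (auto intro: dvd_power_diff' assms)
  then show ?thesis unfolding eq by (auto intro!: dvd_sum)
qed


definition rk :: "'v::finite \<Rightarrow> nat" where "rk = (SOME f. inj f)"

lemma inj_rk: "inj (rk :: 'v::finite \<Rightarrow> nat)"
proof -
  obtain f :: "'v \<Rightarrow> nat" and n where "inj_on f UNIV"
    using finite_imp_inj_to_nat_seg[OF finite_UNIV[where 'a='v]] by blast
  then have "\<exists>f::'v \<Rightarrow> nat. inj f" by blast
  then show ?thesis unfolding rk_def by (rule someI_ex)
qed

definition enc :: "('v::finite \<Rightarrow>\<^sub>0 nat) \<Rightarrow> (nat \<Rightarrow>\<^sub>0 nat)" where
  "enc m = (\<Sum>v\<in>UNIV. Poly_Mapping.single (rk v) (Poly_Mapping.lookup m v))"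

lemma enc_add: "enc (a + b) = enc a + enc b"
  by (simp add: enc_def lookup_add single_add sum.distrib)

lemma lookup_enc: "Poly_Mapping.lookup (enc m) (rk v) = Poly_Mapping.lookup m v"
proof -
  have "Poly_Mapping.lookup (enc m) (rk v) = (\<Sum>w\<in>UNIV. if w = v then Poly_Mapping.lookup m w else 0)"
    unfolding enc_def lookup_sum
    by (rule sum.cong) (auto simp: lookup_single when_def dest: injD[OF inj_rk])
  then show ?thesis by simp
qed

lemma enc_inj: "enc a = enc b \<Longrightarrow> a = b"
  by (rule poly_mapping_eqI) (metis lookup_enc)

lemma pm_add_left_cancel: "(a::'v \<Rightarrow>\<^sub>0 nat) + b = a + c \<Longrightarrow> b = c"
  by (rule poly_mapping_eqI) (metis add_left_cancel lookup_add)

lemma cprime_mult: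
  fixes q :: int and X Y :: "'v::finite mpoly_int"
  assumes qp: "\<And>x y. q dvd x * y \<Longrightarrow> q dvd x \<or> q dvd y"
    and X: "\<not> const q dvd X" and Y: "\<not> const q dvd Y"
  shows "\<not> const q dvd X * Y"
proof
  assume XY: "const q dvd X * Y"
  define FX where "FX = {m \<in> Poly_Mapping.keys X. \<not> q dvd Poly_Mapping.lookup X m}"
  define FY where "FY = {m \<in> Poly_Mapping.keys Y. \<not> q dvd Poly_Mapping.lookup Y m}"
  have finFX: "finite FX" and finFY: "finite FY" unfolding FX_def FY_def by auto
  have "FX \<noteq> {}"
  proof -
    obtain m where "\<not> q dvd Poly_Mapping.lookup X m" using X const_dvd_iff by blast
    then have "m \<in> FX" unfolding FX_def by (auto simp: in_keys_iff)
    then show ?thesis by auto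
  qed
  have "FY \<noteq> {}"
  proof -
    obtain m where "\<not> q dvd Poly_Mapping.lookup Y m" using Y const_dvd_iff by blast
    then have "m \<in> FY" unfolding FY_def by (auto simp: in_keys_iff)
    then show ?thesis by auto
  qed
  have "Max (enc ` FX) \<in> enc ` FX" by (rule Max_in) (use finFX \<open>FX \<noteq> {}\<close> in auto)
  then obtain a0 where a0: "a0 \<in> FX" "enc a0 = Max (enc ` FX)" by auto
  have a0max: "enc a \<le> enc a0" if "a \<in> FX" for a
    using a0(2) finFX that by simp
  have "Max (enc ` FY) \<in> enc ` FY" by (rule Max_in) (use finFY \<open>FY \<noteq> {}\<close> in auto)
  then obtain b0 where b0: "b0 \<in> FY" "enc b0 = Max (enc ` FY)" by auto
  have b0max: "enc b \<le> enc b0" if "b \<in> FY" for b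
    using b0(2) finFY that by simp
  define k where "k = a0 + b0"
  define T' where "T' a b = (if a + b = k \<and> \<not> (a = a0 \<and> b = b0) then Poly_Mapping.lookup X a * Poly_Mapping.lookup Y b else 0)" for a b
  have a0k: "a0 \<in> Poly_Mapping.keys X" and b0k: "b0 \<in> Poly_Mapping.keys Y"
    using a0 b0 unfolding FX_def FY_def by auto
  have pt: "(if a + b = k then Poly_Mapping.lookup X a * Poly_Mapping.lookup Y b else 0)
      = T' a b + (if a = a0 then (if b = b0 then Poly_Mapping.lookup X a0 * Poly_Mapping.lookup Y b0 else 0) else 0)" for a b
    unfolding T'_def k_def by auto
  have "Poly_Mapping.lookup (X * Y) k =
     (\<Sum>a\<in>Poly_Mapping.keys X. \<Sum>b\<in>Poly_Mapping.keys Y. T' a b) +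
     (\<Sum>a\<in>Poly_Mapping.keys X. \<Sum>b\<in>Poly_Mapping.keys Y. (if a = a0 then (if b = b0 then Poly_Mapping.lookup X a0 * Poly_Mapping.lookup Y b0 else 0) else 0))"
    unfolding lookup_mult_sum pt by (simp only: sum.distrib)
  also have "(\<Sum>a\<in>Poly_Mapping.keys X. \<Sum>b\<in>Poly_Mapping.keys Y. (if a = a0 then (if b = b0 then Poly_Mapping.lookup X a0 * Poly_Mapping.lookup Y b0 else 0) else 0))
     = Poly_Mapping.lookup X a0 * Poly_Mapping.lookup Y b0"
  proof -
    have inner: "(\<Sum>b\<in>Poly_Mapping.keys Y. (if a = a0 then (if b = b0 then Poly_Mapping.lookup X a0 * Poly_Mapping.lookup Y b0 else 0) else 0))
       = (if a = a0 then Poly_Mapping.lookup X a0 * Poly_Mapping.lookup Y b0 else 0)" for a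
      by (cases "a = a0") (simp_all add: b0k)
    show ?thesis unfolding inner by (simp add: a0k)
  qed
  finally have lk: "Poly_Mapping.lookup (X * Y) k = (\<Sum>a\<in>Poly_Mapping.keys X. \<Sum>b\<in>Poly_Mapping.keys Y. T' a b) + Poly_Mapping.lookup X a0 * Poly_Mapping.lookup Y b0" .
  have T'dvd: "q dvd T' a b" if ak: "a \<in> Poly_Mapping.keys X" and bk: "b \<in> Poly_Mapping.keys Y" for a b
  proof (cases "a + b = k \<and> \<not> (a = a0 \<and> b = b0)")
    case False
    then show ?thesis unfolding T'_def by (simp only: if_False) simp
  next
    case True
    then have abk: "a + b = k" and ne: "\<not> (a = a0 \<and> b = b0)" by auto
    have "enc (a + b) = enc (a0 + b0)" using abk unfolding k_def by simp
    then have encs: "enc a + enc b = enc a0 + enc b0" by (simp only: enc_add)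
    show ?thesis
    proof (cases rule: linorder_cases[of "enc a0" "enc a"])
      case less
      have "a \<notin> FX"
      proof
        assume "a \<in> FX" then have "enc a \<le> enc a0" by (rule a0max)
        with less show False by simp
      qed
      then have "q dvd Poly_Mapping.lookup X a" using ak unfolding FX_def by auto
      then show ?thesis unfolding T'_def by auto
    next
      case greater
      have "enc b0 < enc b"
      proof (rule ccontr)
        assume "\<not> enc b0 < enc b"
        then have "enc b \<le> enc b0" by simp
        have "enc a + enc b < enc a0 + enc b0" using greater \<open>enc b \<le> enc b0\<close> by (rule add_less_le_mono)
        then show False using encs by simp
      qed
      have "b \<notin> FY"
      proof
        assume "b \<in> FY" then have "enc b \<le> enc b0" by (rule b0max)
        with \<open>enc b0 < enc b\<close> show False by simp
      qed
      then have "q dvd Poly_Mapping.lookup Y b" using bk unfolding FY_def by auto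
      then show ?thesis unfolding T'_def by auto
    next
      case equal
      then have "a = a0" by (intro enc_inj) simp
      then have "a0 + b = a0 + b0" using abk unfolding k_def by simp
      then have "b = b0" by (rule pm_add_left_cancel)
      then show ?thesis using ne \<open>a = a0\<close> by simp
    qed
  qed
  have "q dvd (\<Sum>a\<in>Poly_Mapping.keys X. \<Sum>b\<in>Poly_Mapping.keys Y. T' a b)"
    by (intro dvd_sum) (use T'dvd in auto)
  moreover have "q dvd Poly_Mapping.lookup (X * Y) k" using XY const_dvd_iff by blast
  ultimately have "q dvd Poly_Mapping.lookup X a0 * Poly_Mapping.lookup Y b0"
    unfolding lk by (simp add: dvd_add_right_iff)
  then show False using qp a0 b0 unfolding FX_def FY_def by auto
qed

lemma mp_no_zero_div:
  fixes X Y :: "'v::finite mpoly_int"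
  assumes "X * Y = 0" shows "X = 0 \<or> Y = 0"
proof -
  have qp: "(0::int) dvd x * y \<Longrightarrow> 0 dvd x \<or> 0 dvd y" for x y by simp
  show ?thesis using cprime_mult[OF qp, of X Y] assms by auto
qed

lemma p_prime_mult:
  fixes X Y :: "'v::finite mpoly_int"
  assumes "prime (p::int)" "const p dvd X * Y" shows "const p dvd X \<or> const p dvd Y"
proof -
  have qp: "p dvd x * y \<Longrightarrow> p dvd x \<or> p dvd y" for x y using assms(1) by (simp add: prime_dvd_mult_iff)
  show ?thesis using cprime_mult[OF qp, of X Y] assms by auto
qed


definition inI :: "int \<Rightarrow> 'v mpoly_int \<Rightarrow> 'v mpoly_int \<Rightarrow> bool" where
  "inI p al X \<longleftrightarrow> (\<exists>A B. X = const p * A + al * B)"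

definition prim :: "('v \<Rightarrow> int) \<Rightarrow> bool" where
  "prim a \<longleftrightarrow> (\<forall>q::int. prime q \<longrightarrow> \<not> (\<forall>j. q dvd a j))"

lemma linform_upd: "linform (a(j := c)) = linform a + const (c - a j) * var j"
proof -
  have "const ((a(j := c)) i) * var i = const (a i) * var i + (if i = j then const (c - a j) * var j else 0)" for i
    by (auto simp: const_diff algebra_simps)
  then show ?thesis unfolding linform_def by (simp add: sum.distrib)
qed

lemma subst_upd_linform:
  "psubst (var(k := var k + Z)) (linform b) = linform b + const (b k) * Z"
proof -
  have "const (b i) * (var(k := var k + Z)) i = const (b i) * var i + (if i = k then const (b k) * Z else 0)" for i
    by (auto simp: algebra_simps)
  have "psubst (var(k := var k + Z)) (linform b) = (\<Sum>i\<in>UNIV. const (b i) * var i + (if i = k then const (b k) * Z else 0))"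
    unfolding subst_linform by (rule sum.cong) (auto simp: algebra_simps)
  then show ?thesis by (simp add: sum.distrib linform_def)
qed

lemma elem_inv:
  assumes "j \<noteq> k"
  shows "psubst (var(k := var k + const c * var j)) (psubst (var(k := var k + const (- c) * var j)) X) = X"
proof -
  have "(\<lambda>v. psubst (var(k := var k + const c * var j)) ((var(k := var k + const (- c) * var j)) v)) = var"
  proof
    fix v show "psubst (var(k := var k + const c * var j)) ((var(k := var k + const (- c) * var j)) v) = var v"
      using assms by (auto simp: subst_add subst_diff subst_mult const_uminus algebra_simps)
  qed
  then show ?thesis by (simp add: subst_comp subst_id)
qed

lemma lookup_monom_mult:
  "Poly_Mapping.lookup (Poly_Mapping.single m c * (B::'v mpoly_int)) k =
     (\<Sum>b\<in>Poly_Mapping.keys B. if m + b = k then c * Poly_Mapping.lookup B b else 0)"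
proof (cases "c = 0")
  case True
  then show ?thesis by (simp only: True single_zero mult_zero_left lookup_zero if_cancel sum.neutral_const)
next
  case False
  then have K: "Poly_Mapping.keys (Poly_Mapping.single m c) = {m}" by simp
  show ?thesis unfolding lookup_mult_sum K
    by (simp only: sum.insert finite.emptyI empty_iff not_False_eq_True sum.empty add_0_right lookup_single_eq)
qed

lemma linform_single: "linform a = (\<Sum>i\<in>UNIV. Poly_Mapping.single (dl i) (a i))"
  unfolding linform_def by (simp add: const_def var_def mult_single)

lemma lookup_lin_mult:
  "Poly_Mapping.lookup (linform a * B) k =
    (\<Sum>i\<in>UNIV. \<Sum>b\<in>Poly_Mapping.keys B. if dl i + b = k then a i * Poly_Mapping.lookup B b else 0)"
  unfolding linform_single sum_distrib_right lookup_sum lookup_monom_mult ..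

lemma dl_add_ne_0: "dl i + b \<noteq> 0"
proof
  assume "dl i + b = 0"
  then have "Poly_Mapping.lookup (dl i + b) i = 0" by simp
  then show False by (simp add: lookup_add)
qed

lemma dl_add_eq_dl: "(dl i + b = dl j) \<longleftrightarrow> (i = j \<and> b = 0)"
proof
  assume H: "dl i + b = dl j"
  have L: "Poly_Mapping.lookup (dl i + b) v = Poly_Mapping.lookup (dl j) v" for v using H by simp
  have "i = j" using L[of i] by (auto simp: lookup_add lookup_single when_def split: if_splits)
  moreover have "b = 0"
    by (rule poly_mapping_eqI) (use L \<open>i = j\<close> in \<open>auto simp: lookup_add lookup_single when_def split: if_splits\<close>)
  ultimately show "i = j \<and> b = 0" ..
qed simp

lemma lookup_single_mult_0: "Poly_Mapping.lookup (linform a * B) 0 = 0"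
  unfolding lookup_lin_mult using dl_add_ne_0 by (simp add: dl_add_ne_0[simplified])

lemma coeff_lin_mult: "Poly_Mapping.lookup (linform a * B) (dl j) = a j * Poly_Mapping.lookup B 0"
proof -
  have "Poly_Mapping.lookup (linform a * B) (dl j) =
    (\<Sum>i\<in>UNIV. if i = j then (\<Sum>b\<in>Poly_Mapping.keys B. if b = 0 then a i * Poly_Mapping.lookup B b else 0) else 0)"
    unfolding lookup_lin_mult dl_add_eq_dl by (intro sum.cong refl) auto
  also have "\<dots> = (\<Sum>b\<in>Poly_Mapping.keys B. if b = 0 then a j * Poly_Mapping.lookup B b else 0)"
    by simp
  also have "\<dots> = a j * Poly_Mapping.lookup B 0"
    by (simp add: in_keys_iff)
  finally show ?thesis .
qed

lemma coeff_lin: "Poly_Mapping.lookup (linform a) (dl j) = a j"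
  using coeff_lin_mult[of a 1 j] by simp

lemma dvd_const_lin: "linform (a::'v::finite \<Rightarrow> int) dvd const c \<Longrightarrow> c = 0"
proof -
  assume "linform a dvd const c"
  then obtain B where "const c = linform a * B" by (auto elim: dvdE)
  then have "Poly_Mapping.lookup (const c :: 'v mpoly_int) 0 = 0" by (simp only: lookup_single_mult_0)
  then show "c = 0" by (simp add: const_def)
qed

lemma inI_const: "inI p (linform (a::'v::finite \<Rightarrow> int)) (const c) \<Longrightarrow> p dvd c"
proof -
  assume "inI p (linform a) (const c)"
  then obtain A B where "const c = const p * A + linform a * B" by (auto simp: inI_def)
  then have "Poly_Mapping.lookup (const c :: 'v mpoly_int) 0 = p * Poly_Mapping.lookup A 0"
    by (simp only: lookup_add lookup_single_mult_0 lookup_const_mult add_0_right)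
  then show "p dvd c" by (simp add: const_def)
qed

lemma base_case:
  fixes a :: "'v::finite \<Rightarrow> int"
  assumes u: "a j0 * a j0 = 1"
  shows "(\<forall>X Y. linform a dvd X * Y \<longrightarrow> linform a dvd X \<or> linform a dvd Y) \<and>
    (\<forall>p X Y. prime p \<longrightarrow> inI p (linform a) (X * Y) \<longrightarrow> inI p (linform a) X \<or> inI p (linform a) Y)"
proof -
  define u where "u = a j0"
  define S' where "S' = (\<Sum>i\<in>UNIV - {j0}. const (a i) * var i)"
  define s where "s = var(j0 := - const u * S')"
  have uu: "const u * const u = (1 :: 'v mpoly_int)" using u unfolding u_def by (simp flip: const_mult)
  have uu': "const u * (const u * W) = W" for W :: "'v mpoly_int" using uu by (metis mult.assoc mult_1_left)
  have lin: "linform a = const u * var j0 + S'"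
    unfolding linform_def S'_def u_def by (simp add: sum.remove)
  have sa: "psubst s (linform a) = 0"
  proof -
    have "psubst s (linform a) = const u * s j0 + (\<Sum>i\<in>UNIV - {j0}. const (a i) * s i)"
      unfolding subst_linform u_def by (simp add: sum.remove)
    also have "(\<Sum>i\<in>UNIV - {j0}. const (a i) * s i) = S'"
      unfolding S'_def s_def by (rule sum.cong) auto
    also have "const u * s j0 = - (const u * const u) * S'" unfolding s_def by simp
    finally show ?thesis using uu by simp
  qed
  have cong: "linform a dvd (psubst s X - X)" for X
  proof (rule subst_cong_dvd)
    fix v
    show "linform a dvd (s v - var v)"
    proof (cases "v = j0")
      case True
      have "s v - var v = - const u * (S' + const u * var j0)"
        using True unfolding s_def by (simp add: algebra_simps uu')
      also have "\<dots> = - const u * linform a" using lin by (simp add: algebra_simps)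
      finally show ?thesis by simp
    qed (simp add: s_def)
  qed
  have F1: "linform a dvd X \<or> linform a dvd Y" if H: "linform a dvd X * Y" for X Y
  proof -
    obtain C where eq: "X * Y = linform a * C" using H by (auto simp: dvd_def)
    have "psubst s X * psubst s Y = psubst s (X * Y)" by (simp add: subst_mult)
    also have "\<dots> = 0" unfolding eq by (simp add: subst_mult sa)
    finally have "psubst s X * psubst s Y = 0" .
    then have "psubst s X = 0 \<or> psubst s Y = 0" by (rule mp_no_zero_div)
    then show ?thesis using cong[of X] cong[of Y] by auto
  qed
  have F2: "inI p (linform a) X \<or> inI p (linform a) Y" if P: "prime p" and H: "inI p (linform a) (X * Y)" for p X Y
  proof -
    obtain A B where eq: "X * Y = const p * A + linform a * B" using H by (auto simp: inI_def)
    have "psubst s X * psubst s Y = psubst s (X * Y)" by (simp add: subst_mult)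
    also have "\<dots> = const p * psubst s A" unfolding eq by (simp add: subst_add subst_mult sa)
    finally have "const p dvd psubst s X * psubst s Y" by simp
    then have "const p dvd psubst s X \<or> const p dvd psubst s Y" using P by (intro p_prime_mult)
    moreover have "inI p (linform a) Z" if H2: "const p dvd psubst s Z" for Z
    proof -
      obtain C where C: "psubst s Z = const p * C" using H2 by (auto simp: dvd_def)
      obtain D where D: "psubst s Z - Z = linform a * D" using cong[of Z] by (auto simp: dvd_def)
      have "Z = const p * C + linform a * (- D)" using C D by (simp add: algebra_simps)
      then show ?thesis unfolding inI_def by blast
    qed
    ultimately show ?thesis by blast
  qed
  show ?thesis using F1 F2 by blast
qed


lemma lin_prime:
  fixes a :: "'v::finite \<Rightarrow> int"
  assumes "prim a"
  shows "(\<forall>X Y. linform a dvd X * Y \<longrightarrow> linform a dvd X \<or> linform a dvd Y) \<and>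
    (\<forall>p X Y. prime p \<longrightarrow> inI p (linform a) (X * Y) \<longrightarrow> inI p (linform a) X \<or> inI p (linform a) Y)"
  using assms
proof (induction a rule: measure_induct_rule[where f="\<lambda>a. \<Sum>j\<in>UNIV. nat \<bar>a j\<bar>"])
  case (less a)
  show ?case
  proof (cases "\<exists>j0. a j0 * a j0 = 1")
    case True
    then obtain j0 where "a j0 * a j0 = 1" by blast
    then show ?thesis by (rule base_case)
  next
    case False
    have pr: "\<not> (\<forall>j. q dvd a j)" if "prime q" for q
      using less.prems that unfolding prim_def by blast
    have "\<exists>j. a j \<noteq> 0"
    proof (rule ccontr)
      assume "\<not> ?thesis"
      then have "\<forall>j. (2::int) dvd a j" by auto
      then show False using pr[of 2] by simp
    qed
    then obtain j1 where j1: "a j1 \<noteq> 0" by blast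
    have "\<exists>k1. k1 \<noteq> j1 \<and> a k1 \<noteq> 0"
    proof (rule ccontr)
      assume "\<not> ?thesis"
      then have z: "\<And>k. k \<noteq> j1 \<Longrightarrow> a k = 0" by auto
      have "\<not> is_unit (a j1)"
      proof
        assume "is_unit (a j1)"
        then have "\<bar>a j1\<bar> = 1" by (simp add: zdvd1_eq)
        then have "a j1 * a j1 = 1" by (metis abs_mult_self_eq mult_1)
        then show False using False by auto
      qed
      then obtain q where q: "prime q" "q dvd a j1" using prime_divisor_exists[OF j1] by blast
      then have "\<forall>j. q dvd a j" using z by (metis dvd_0_right)
      then show False using pr q(1) by blast
    qed
    then obtain k1 where k1: "k1 \<noteq> j1" "a k1 \<noteq> 0" by blast
    obtain j k where jk: "j \<noteq> k" "a j \<noteq> 0" "a k \<noteq> 0" "\<bar>a k\<bar> \<le> \<bar>a j\<bar>"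
    proof (cases "\<bar>a k1\<bar> \<le> \<bar>a j1\<bar>")
      case True then show ?thesis using that[of j1 k1] j1 k1 by auto
    next
      case False then show ?thesis using that[of k1 j1] j1 k1 by auto
    qed
    define eps where "eps = sgn (a j) * sgn (a k)"
    define a' where "a' = a(j := a j - eps * a k)"
    have absj: "\<bar>a j - eps * a k\<bar> = \<bar>a j\<bar> - \<bar>a k\<bar>"
      using jk unfolding eps_def by (cases "a j > 0"; cases "a k > 0") (auto simp: sgn_if abs_if)
    have a'k: "a' k = a k" using jk(1) unfolding a'_def by simp
    have a'j: "a' j = a j - eps * a k" unfolding a'_def by simp
    have meas: "(\<Sum>i\<in>UNIV. nat \<bar>a' i\<bar>) < (\<Sum>i\<in>UNIV. nat \<bar>a i\<bar>)"
    proof -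
      have "(\<Sum>i\<in>UNIV. nat \<bar>a' i\<bar>) = nat \<bar>a' j\<bar> + (\<Sum>i\<in>UNIV - {j}. nat \<bar>a' i\<bar>)"
        by (simp add: sum.remove)
      also have "(\<Sum>i\<in>UNIV - {j}. nat \<bar>a' i\<bar>) = (\<Sum>i\<in>UNIV - {j}. nat \<bar>a i\<bar>)"
        by (rule sum.cong) (auto simp: a'_def)
      also have "nat \<bar>a' j\<bar> < nat \<bar>a j\<bar>" using a'j absj jk by simp
      then have "nat \<bar>a' j\<bar> + (\<Sum>i\<in>UNIV - {j}. nat \<bar>a i\<bar>) < nat \<bar>a j\<bar> + (\<Sum>i\<in>UNIV - {j}. nat \<bar>a i\<bar>)" by simp
      also have "\<dots> = (\<Sum>i\<in>UNIV. nat \<bar>a i\<bar>)" by (simp add: sum.remove)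
      finally show ?thesis .
    qed
    have prim': "prim a'"
      unfolding prim_def
    proof (intro allI impI notI)
      fix q :: int assume q: "prime q" "\<forall>i. q dvd a' i"
      have "q dvd a k" using q(2) a'k by metis
      moreover have "q dvd a' j" using q(2) by blast
      ultimately have "q dvd a j" using a'j by (metis dvd_add_left_iff dvd_mult diff_add_cancel)
      then have "\<forall>i. q dvd a i" using q(2) unfolding a'_def by (metis fun_upd_apply)
      then show False using pr q(1) by blast
    qed
    note IH = less.IH[OF meas prim']
    define E where "E = psubst (var(k := var k + const eps * var j))"
    define E' where "E' = psubst (var(k := var k + const (- eps) * var j))"
    have EE': "E (E' X) = X" for X unfolding E_def E'_def by (rule elem_inv) (use jk in auto)
    have E'E: "E' (E X) = X" for X
      using elem_inv[of j k "- eps" X] jk(1) unfolding E_def E'_def by simp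
    have Ea': "E (linform a') = linform a"
    proof -
      have "E (linform a') = linform a' + const (a' k) * (const eps * var j)"
        unfolding E_def by (rule subst_upd_linform)
      moreover have "a = a'(j := a j)" unfolding a'_def by simp
      then have "linform a = linform a' + const (a j - a' j) * var j" by (metis linform_upd)
      ultimately show ?thesis using a'k a'j by (simp add: const_mult algebra_simps)
    qed
    have E'a: "E' (linform a) = linform a'" using Ea' E'E by metis
    have E'm: "E' (X * Y) = E' X * E' Y" for X Y unfolding E'_def by (rule subst_mult)
    have Em: "E (X * Y) = E X * E Y" for X Y unfolding E_def by (rule subst_mult)
    have E'add: "E' (X + Y) = E' X + E' Y" for X Y unfolding E'_def by (rule subst_add)
    have Eadd: "E (X + Y) = E X + E Y" for X Y unfolding E_def by (rule subst_add)
    have E'c: "E' (const c) = const c" for c unfolding E'_def by simp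
    have Ec: "E (const c) = const c" for c unfolding E_def by simp
    have F1: "linform a dvd X \<or> linform a dvd Y" if H: "linform a dvd X * Y" for X Y
    proof -
      obtain C where C: "X * Y = linform a * C" using H by (auto simp: dvd_def)
      have "E' X * E' Y = linform a' * E' C" using C by (metis E'm E'a)
      then have "linform a' dvd E' X * E' Y" by simp
      then have "linform a' dvd E' X \<or> linform a' dvd E' Y" using IH by blast
      moreover have "linform a dvd Z" if H2: "linform a' dvd E' Z" for Z
      proof -
        obtain D where "E' Z = linform a' * D" using H2 by (auto simp: dvd_def)
        then have "E (E' Z) = linform a * E D" by (metis Em Ea')
        then show ?thesis using EE' by simp
      qed
      ultimately show ?thesis by blast
    qed
    have F2: "inI p (linform a) X \<or> inI p (linform a) Y" if P: "prime p" and H: "inI p (linform a) (X * Y)" for p X Y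
    proof -
      obtain A B where C: "X * Y = const p * A + linform a * B" using H by (auto simp: inI_def)
      have "E' X * E' Y = const p * E' A + linform a' * E' B" using C by (metis E'm E'a E'add E'c)
      then have "inI p (linform a') (E' X * E' Y)" unfolding inI_def by blast
      then have "inI p (linform a') (E' X) \<or> inI p (linform a') (E' Y)" using IH P by blast
      moreover have "inI p (linform a) Z" if H2: "inI p (linform a') (E' Z)" for Z
      proof -
        obtain A' B' where "E' Z = const p * A' + linform a' * B'" using H2 by (auto simp: inI_def)
        then have "E (E' Z) = const p * E A' + linform a * E B'" by (metis Em Ea' Eadd Ec)
        then show ?thesis using EE' unfolding inI_def by metis
      qed
      ultimately show ?thesis by blast
    qed
    show ?thesis using F1 F2 by blast
  qed
qed


lemma prim_of_hyp:
  assumes "\<forall>q::int. prime q \<longrightarrow> \<not> const q dvd linform (a :: 'v::finite \<Rightarrow> int)"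
  shows "prim a"
  unfolding prim_def
proof (intro allI impI notI)
  fix q :: int assume q: "prime q" "\<forall>j. q dvd a j"
  have "linform a = const q * linform (\<lambda>j. a j div q)"
    unfolding linform_def sum_distrib_left
  proof (rule sum.cong[OF refl])
    fix j
    have e0: "a j = q * (a j div q)" using q(2) by simp
    have e: "const (a j) = const q * (const (a j div q) :: 'v mpoly_int)"
      unfolding const_mult[symmetric] using e0 by (rule arg_cong)
    show "const (a j) * var j = const q * (const (a j div q) * var j)" by (simp only: e mult.assoc)
  qed
  then have "const q dvd linform a" by (simp only: dvd_triv_left)
  then show False using assms q(1) by blast
qed

lemma lin_dvd_prime:
  assumes "prim a" "linform a dvd X * Y" shows "linform a dvd X \<or> linform a dvd Y"
  using conjunct1[OF lin_prime[OF assms(1)], rule_format, OF assms(2)] .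

lemma lin_inI_prime:
  assumes "prim a" "prime p" "inI p (linform a) (X * Y)" shows "inI p (linform a) X \<or> inI p (linform a) Y"
  using conjunct2[OF lin_prime[OF assms(1)], rule_format, OF assms(2) assms(3)] .

lemma lin_dvd_prod:
  assumes "prim (a :: 'v::finite \<Rightarrow> int)" "finite I" "\<forall>k\<in>I. \<not> linform a dvd F k"
  shows "\<not> linform a dvd (\<Prod>k\<in>I. F k)"
  using assms(2,3)
proof (induction I rule: finite_induct)
  case empty
  show ?case
  proof
    assume "linform a dvd (\<Prod>k\<in>{}. F k)"
    then have "linform a dvd const 1" by simp
    then show False using dvd_const_lin by fastforce
  qed
next
  case (insert x I)
  have "\<not> linform a dvd F x" using insert.prems by simp
  moreover have "\<not> linform a dvd (\<Prod>k\<in>I. F k)" using insert.IH insert.prems by simp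
  ultimately have "\<not> linform a dvd F x * (\<Prod>k\<in>I. F k)" using lin_dvd_prime[OF assms(1)] by blast
  then show ?case using insert.hyps by simp
qed

lemma lin_inI_prod:
  assumes "prim (a :: 'v::finite \<Rightarrow> int)" "prime p" "finite I" "\<forall>k\<in>I. \<not> inI p (linform a) (F k)"
  shows "\<not> inI p (linform a) (\<Prod>k\<in>I. F k)"
  using assms(3,4)
proof (induction I rule: finite_induct)
  case empty
  show ?case
  proof
    assume "inI p (linform a) (\<Prod>k\<in>{}. F k)"
    then have "inI p (linform a) (const 1)" by simp
    then have "p dvd 1" by (rule inI_const)
    then show False using prime_gt_1_int[OF assms(2)] by (simp add: zdvd1_eq)
  qed
next
  case (insert x I)
  have "\<not> inI p (linform a) (F x)" using insert.prems by simp
  moreover have "\<not> inI p (linform a) (\<Prod>k\<in>I. F k)" using insert.IH insert.prems by simp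
  ultimately have "\<not> inI p (linform a) (F x * (\<Prod>k\<in>I. F k))" using lin_inI_prime[OF assms(1,2)] by blast
  then show ?case using insert.hyps by simp
qed

lemma lin_dvd_lin: assumes "linform b = linform a * Y" shows "b j = Poly_Mapping.lookup Y 0 * a j"
proof -
  have "b j = Poly_Mapping.lookup (linform b) (dl j)" by (simp only: coeff_lin)
  also have "\<dots> = Poly_Mapping.lookup (linform a * Y) (dl j)" by (simp only: assms)
  also have "\<dots> = a j * Poly_Mapping.lookup Y 0" by (rule coeff_lin_mult)
  finally show ?thesis by (simp only: mult.commute)
qed

lemma inI_lin:
  assumes "inI p (linform a) (linform b)"
  shows "\<exists>c. \<forall>j. p dvd (b j - c * a j)"
proof -
  obtain A B where AB: "linform b = const p * A + linform a * B" using assms by (auto simp: inI_def)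
  have "b j = p * Poly_Mapping.lookup A (dl j) + a j * Poly_Mapping.lookup B 0" for j
  proof -
    have "b j = Poly_Mapping.lookup (linform b) (dl j)" by (simp only: coeff_lin)
    also have "\<dots> = p * Poly_Mapping.lookup A (dl j) + a j * Poly_Mapping.lookup B 0"
      unfolding AB by (simp only: lookup_add lookup_const_mult coeff_lin_mult)
    finally show ?thesis .
  qed
  then have "\<forall>j. p dvd (b j - Poly_Mapping.lookup B 0 * a j)" by (simp add: algebra_simps)
  then show ?thesis by blast
qed

lemma linform_zero: "linform (\<lambda>_. 0) = 0"
  by (simp add: linform_def)

lemma nonzero_coeff: assumes "linform a \<noteq> 0" shows "\<exists>j. a j \<noteq> 0"
proof (rule ccontr)
  assume "\<not> (\<exists>j. a j \<noteq> 0)"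
  then have "\<forall>j. a j = 0" by auto
  then have "linform a = 0" by (simp add: linform_def)
  then show False using assms by simp
qed

lemma hyp_eq:
  assumes a1: "a1 j0 \<noteq> 0" and a2: "\<exists>j. a2 j \<noteq> 0"
    and minors: "\<And>j k. a1 j * a2 k = a1 k * a2 j"
  shows "hyperplane a1 = hyperplane a2"
proof -
  have "a2 j0 \<noteq> 0"
  proof
    assume z: "a2 j0 = 0"
    have "a2 k = 0" for k using minors[of j0 k] z a1 by simp
    then show False using a2 by blast
  qed
  have key: "of_int (a1 j0) * (\<Sum>j\<in>UNIV. of_int (a2 j) * x j) = of_int (a2 j0) * (\<Sum>j\<in>UNIV. of_int (a1 j) * (x j :: rat))" for x
    unfolding sum_distrib_left
  proof (rule sum.cong[OF refl])
    fix k
    have "of_int (a1 j0 * a2 k) = (of_int (a2 j0 * a1 k) :: rat)" using minors[of j0 k] by (simp add: mult.commute)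
    then show "of_int (a1 j0) * (of_int (a2 k) * x k) = of_int (a2 j0) * (of_int (a1 k) * x k)"
      by (simp add: mult.assoc[symmetric])
  qed
  show ?thesis unfolding hyperplane_def
  proof (intro Collect_cong iffI)
    fix x :: "_ \<Rightarrow> rat"
    assume "(\<Sum>j\<in>UNIV. of_int (a1 j) * x j) = 0"
    then have "of_int (a1 j0) * (\<Sum>j\<in>UNIV. of_int (a2 j) * x j) = 0" using key[of x] by simp
    then show "(\<Sum>j\<in>UNIV. of_int (a2 j) * x j) = 0" using a1 by simp
  next
    fix x :: "_ \<Rightarrow> rat"
    assume "(\<Sum>j\<in>UNIV. of_int (a2 j) * x j) = 0"
    then have "of_int (a2 j0) * (\<Sum>j\<in>UNIV. of_int (a1 j) * x j) = 0" using key[of x] by simp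
    then show "(\<Sum>j\<in>UNIV. of_int (a1 j) * x j) = 0" using \<open>a2 j0 \<noteq> 0\<close> by simp
  qed
qed

lemma const_p_not_dvd_prod:
  assumes "prime p" "finite I" "\<forall>k\<in>I. \<not> const p dvd (F k :: 'v::finite mpoly_int)"
  shows "\<not> const p dvd (\<Prod>k\<in>I. F k)"
  using assms(2,3)
proof (induction I rule: finite_induct)
  case empty
  show ?case
  proof
    assume "const p dvd (\<Prod>k\<in>{}. F k)"
    then have "const p dvd (1 :: 'v mpoly_int)" by simp
    then have "p dvd Poly_Mapping.lookup (1 :: 'v mpoly_int) 0" unfolding const_dvd_iff by blast
    then have "p dvd 1" by simp
    then show False using prime_gt_1_int[OF assms(1)] by (simp add: zdvd1_eq)
  qed
next
  case (insert x I)
  have "\<not> const p dvd F x" using insert.prems by simp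
  moreover have "\<not> const p dvd (\<Prod>k\<in>I. F k)" using insert.IH insert.prems by simp
  ultimately have "\<not> const p dvd F x * (\<Prod>k\<in>I. F k)" using p_prime_mult[OF assms(1)] by blast
  then show ?case using insert.hyps by simp
qed

lemma const_eq_0: "const c = (0 :: 'v mpoly_int) \<longleftrightarrow> c = 0"
proof
  assume "const c = (0 :: 'v mpoly_int)"
  then have "Poly_Mapping.lookup (const c :: 'v mpoly_int) 0 = 0" by simp
  then show "c = 0" by (simp add: const_def)
qed simp


definition Qi :: "nat \<Rightarrow> (nat \<Rightarrow> 'v::finite \<Rightarrow> int) \<Rightarrow> nat \<Rightarrow> 'v mpoly_int" where
  "Qi n a i = (\<Prod>k\<in>{..<n} - {i}. linform (a k))"

definition Lf :: "('v::finite \<Rightarrow> int) \<Rightarrow> ('v \<Rightarrow> 'v mpoly_int) \<Rightarrow> 'v mpoly_int" where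
  "Lf b g = (\<Sum>j\<in>UNIV. const (b j) * g j)"

lemma linform_Lf: "linform b = Lf b var"
  by (simp add: linform_def Lf_def)

lemma const_sum: "const (\<Sum>i\<in>I. f i) = (\<Sum>i\<in>I. const (f i) :: 'v mpoly_int)"
  by (induction I rule: infinite_finite_induct) (auto simp: const_add)

lemma Lf_comb:
  assumes "\<And>j. b j = x * c j + y * d j"
  shows "Lf b g = const x * Lf c g + const y * Lf d g"
  unfolding Lf_def sum_distrib_left sum.distrib[symmetric]
  by (rule sum.cong[OF refl]) (simp add: assms const_add const_mult algebra_simps)

lemma Lf_diff: "Lf b (\<lambda>j. d j - const p * g j) = Lf b d - const p * Lf b g"
  unfolding Lf_def sum_distrib_left sum_subtractf[symmetric]
  by (rule sum.cong[OF refl]) (simp add: algebra_simps)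

lemma Lf_constR: "Lf b (\<lambda>t. const (G t) * R) = const (\<Sum>t\<in>UNIV. b t * G t) * R"
  unfolding Lf_def const_sum sum_distrib_right
  by (rule sum.cong[OF refl]) (simp add: const_mult algebra_simps)

lemma Q_split: "i < n \<Longrightarrow> defpoly n a = linform (a i) * Qi n a i"
  unfolding defpoly_def Qi_def by (simp add: prod.remove lessThan_iff)

lemma Qi_dvd: "i < n \<Longrightarrow> k \<noteq> i \<Longrightarrow> linform (a i) dvd Qi n a k"
proof -
  assume "i < n" "k \<noteq> i"
  then have "i \<in> {..<n} - {k}" by auto
  then have "Qi n a k = linform (a i) * (\<Prod>m\<in>{..<n} - {k} - {i}. linform (a m))"
    unfolding Qi_def by (simp add: prod.remove)
  then show ?thesis by simp
qed

lemma dQ: "pderiv_mp j (defpoly n a) = (\<Sum>i<n. const (a i j) * Qi n a i)"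
  unfolding defpoly_def Qi_def by (simp add: pderiv_prod pderiv_linform)

lemma sum_dQ: "(\<Sum>j\<in>UNIV. d j * pderiv_mp j (defpoly n a)) = (\<Sum>i<n. Lf (a i) d * Qi n a i)"
proof -
  have "(\<Sum>j\<in>UNIV. d j * pderiv_mp j (defpoly n a)) = (\<Sum>j\<in>UNIV. \<Sum>i<n. const (a i j) * d j * Qi n a i)"
    unfolding dQ sum_distrib_left by (simp add: algebra_simps)
  also have "\<dots> = (\<Sum>i<n. \<Sum>j\<in>UNIV. const (a i j) * d j * Qi n a i)" by (rule sum.swap)
  also have "\<dots> = (\<Sum>i<n. Lf (a i) d * Qi n a i)" unfolding Lf_def sum_distrib_right ..
  finally show ?thesis .
qed

lemma rel_iff: "u \<in> coker_rel n a \<longleftrightarrow> (\<exists>h g. \<forall>i<n. u i = h i * linform (a i) + Lf (a i) g)"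
  unfolding coker_rel_def Lf_def by (simp add: pderiv_linform)

lemma jac_iff: "X \<in> jac_ideal n a \<longleftrightarrow> (\<exists>c d. X = c * defpoly n a + (\<Sum>i<n. Lf (a i) d * Qi n a i))"
  unfolding jac_ideal_def by (simp add: sum_dQ)

lemma sum_split_at: "i < (n::nat) \<Longrightarrow> (\<Sum>k<n. F k) = F i + (\<Sum>k\<in>{..<n} - {i}. F k)"
  by (rule sum.remove) auto

lemma dvd_sum_others:
  assumes "i < n"
  shows "linform (a i) dvd (\<Sum>k\<in>{..<n} - {i}. F k * Qi n a k)"
  by (rule dvd_sum) (use assms in \<open>auto intro!: dvd_mult Qi_dvd\<close>)


lemma caseA:
  fixes a :: "nat \<Rightarrow> 'v::finite \<Rightarrow> int" and p :: int
  assumes pp: "prime p" and primA: "\<And>i. i < n \<Longrightarrow> prim (a i)"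
    and nz: "\<And>i. i < n \<Longrightarrow> linform (a i) \<noteq> 0"
    and dh: "\<And>i k. i < n \<Longrightarrow> k < n \<Longrightarrow> i \<noteq> k \<Longrightarrow> hyperplane (a i) \<noteq> hyperplane (a k)"
    and i12: "i1 < n" "i2 < n" "i1 \<noteq> i2" and lam: "\<forall>j. p dvd (a i2 j - lam * a i1 j)"
  shows "zero_divisor_coker p n a"
proof -
  define a1 where "a1 = a i1"
  define a2 where "a2 = a i2"
  have p2: "p \<ge> 2" using pp by (rule prime_ge_2_int)
  obtain jm km where D: "a1 jm * a2 km \<noteq> a1 km * a2 jm"
  proof (rule ccontr)
    assume "\<not> thesis"
    then have minors: "\<And>j k. a1 j * a2 k = a1 k * a2 j" using that by blast
    obtain j0 where "a1 j0 \<noteq> 0" using nonzero_coeff[OF nz[OF i12(1)]] unfolding a1_def by blast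
    moreover have "\<exists>j. a2 j \<noteq> 0" using nonzero_coeff[OF nz[OF i12(2)]] unfolding a2_def .
    ultimately have "hyperplane a1 = hyperplane a2" using minors by (rule hyp_eq)
    then show False using dh[OF i12] unfolding a1_def a2_def by blast
  qed
  define Dv where "Dv = a1 jm * a2 km - a1 km * a2 jm"
  have Dv0: "Dv \<noteq> 0" using D unfolding Dv_def by simp
  define Es where "Es = {e. \<exists>\<beta>. \<forall>j. p ^ e dvd (a2 j - \<beta> * a1 j)}"
  have one: "1 \<in> Es" unfolding Es_def using lam unfolding a1_def a2_def by auto
  have bound: "e < nat \<bar>Dv\<bar>" if H: "e \<in> Es" for e
  proof -
    obtain \<beta> where b: "\<forall>j. p ^ e dvd (a2 j - \<beta> * a1 j)" using H unfolding Es_def by blast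
    have "Dv = a1 jm * (a2 km - \<beta> * a1 km) - a1 km * (a2 jm - \<beta> * a1 jm)"
      unfolding Dv_def by (simp add: algebra_simps)
    then have "p ^ e dvd Dv" using b by (simp add: dvd_diff)
    then have "\<bar>p ^ e\<bar> \<le> \<bar>Dv\<bar>" using Dv0 by (intro dvd_imp_le_int)
    moreover have "int e < 2 ^ e"
    proof -
      have "e < 2 ^ e" by (rule less_exp)
      then have "int e < int (2 ^ e)" by linarith
      then show ?thesis by simp
    qed
    moreover have "(2::int) ^ e \<le> p ^ e" using p2 by (intro power_mono) auto
    moreover have "\<bar>p ^ e\<bar> = p ^ e" using p2 by simp
    ultimately show ?thesis by linarith
  qed
  have finEs: "finite Es"
    by (rule finite_subset[of _ "{..<nat \<bar>Dv\<bar>}"]) (use bound in auto)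
  define e where "e = Max Es"
  have eEs: "e \<in> Es" unfolding e_def using finEs one by (intro Max_in) auto
  have emax: "e' \<le> e" if "e' \<in> Es" for e' unfolding e_def using finEs that by simp
  have e1: "e \<ge> 1" using emax[OF one] .
  obtain \<beta> where \<beta>: "\<forall>j. p ^ e dvd (a2 j - \<beta> * a1 j)" using eEs unfolding Es_def by blast
  define u where "u j = (a2 j - \<beta> * a1 j) div p ^ e" for j
  have u: "a2 j = \<beta> * a1 j + p ^ e * u j" for j
    using \<beta> unfolding u_def by (simp add: dvd_mult_div_cancel)
  have notprop: "\<not> (\<exists>\<mu>. \<forall>j. p dvd (u j - \<mu> * a1 j))"
  proof
    assume "\<exists>\<mu>. \<forall>j. p dvd (u j - \<mu> * a1 j)"
    then obtain \<mu> where \<mu>: "\<forall>j. p dvd (u j - \<mu> * a1 j)" by blast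
    have "p ^ Suc e dvd (a2 j - (\<beta> + \<mu> * p ^ e) * a1 j)" for j
    proof -
      have "a2 j - (\<beta> + \<mu> * p ^ e) * a1 j = p ^ e * (u j - \<mu> * a1 j)"
        using u[of j] by (simp add: algebra_simps)
      moreover have "p ^ e * p dvd p ^ e * (u j - \<mu> * a1 j)" using \<mu> by (simp add: mult_dvd_mono)
      ultimately show ?thesis by (simp add: power_Suc2)
    qed
    then have "Suc e \<in> Es" unfolding Es_def by blast
    then show False using emax by fastforce
  qed
  have pa1: "prim a1" unfolding a1_def using primA[OF i12(1)] .
  obtain j0 where j0: "\<not> p dvd a1 j0" using pa1 pp unfolding prim_def by blast
  obtain c0 where c0: "p dvd (c0 * a1 j0 - 1)"
  proof -
    have "coprime p (a1 j0)" using pp j0 by (rule prime_imp_coprime)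
    then have "gcd (a1 j0) p = 1" by (simp add: coprime_iff_gcd_eq_1 gcd.commute)
    then obtain x y where "x * a1 j0 + y * p = 1" using bezout_int[of "a1 j0" p] by auto
    then have "c0 * a1 j0 - 1 = - y * p" if "c0 = x" for c0 using that by (simp add: algebra_simps)
    then have "p dvd (x * a1 j0 - 1)" by simp
    then show ?thesis using that by blast
  qed
  obtain k0 where k0: "\<not> p dvd (a1 j0 * u k0 - a1 k0 * u j0)"
  proof (rule ccontr)
    assume "\<not> thesis"
    then have all: "\<And>k. p dvd (a1 j0 * u k - a1 k * u j0)" using that by blast
    have "p dvd (u k - (c0 * u j0) * a1 k)" for k
    proof -
      have "u k - (c0 * u j0) * a1 k = c0 * (a1 j0 * u k - a1 k * u j0) - (c0 * a1 j0 - 1) * u k"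
        by (simp add: algebra_simps)
      then show ?thesis using all[of k] c0 by (simp add: dvd_diff)
    qed
    then show False using notprop by blast
  qed
  have jk0: "j0 \<noteq> k0" using k0 by auto
  define N where "N b = b j0 * a1 k0 - b k0 * a1 j0" for b :: "'v \<Rightarrow> int"
  define G0 where "G0 t = (if t = j0 then a1 k0 else 0) - (if t = k0 then a1 j0 else 0)" for t
  have sumG0: "(\<Sum>t\<in>UNIV. b t * G0 t) = N b" for b
  proof -
    have "(\<Sum>t\<in>UNIV. b t * G0 t) = (\<Sum>t\<in>UNIV. (if t = j0 then b t * a1 k0 else 0)) - (\<Sum>t\<in>UNIV. (if t = k0 then b t * a1 j0 else 0))"
      unfolding sum_subtractf[symmetric] by (rule sum.cong) (auto simp: G0_def)
    then show ?thesis unfolding N_def by simp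
  qed
  have Na1: "N a1 = 0" unfolding N_def by simp
  define t0 where "t0 = N u"
  have Na2: "N a2 = p ^ e * t0" unfolding t0_def N_def using u by (simp add: algebra_simps)
  have t0: "\<not> p dvd t0"
  proof
    assume "p dvd t0"
    then have "p dvd - t0" by simp
    moreover have "- t0 = a1 j0 * u k0 - a1 k0 * u j0" unfolding t0_def N_def by (simp add: algebra_simps)
    ultimately show False using k0 by simp
  qed
  define P where "P = {i. i < n \<and> (\<exists>c. \<forall>j. p dvd (a i j - c * a1 j))}"
  have i1P: "i1 \<in> P" unfolding P_def a1_def using i12 by (auto intro!: exI[of _ 1])
  have i2P: "i2 \<in> P" unfolding P_def a1_def using i12 lam by auto
  have NP: "p dvd N (a i)" if H: "i \<in> P" for i
  proof -
    obtain c where c: "\<forall>j. p dvd (a i j - c * a1 j)" using H unfolding P_def by blast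
    have "N (a i) = (a i j0 - c * a1 j0) * a1 k0 - (a i k0 - c * a1 k0) * a1 j0"
      unfolding N_def by (simp add: algebra_simps)
    then show ?thesis using c by (simp add: dvd_diff)
  qed
  define R where "R = (\<Prod>k\<in>{..<n} - P. linform (a k))"
  define v where "v i = (if i \<in> P then const (N (a i) div p) * R else 0)" for i
  define g where "g t = const (G0 t) * R" for t
  have Lg: "Lf b g = const (N b) * R" for b
    unfolding g_def Lf_constR sumG0 ..
  have pv: "(\<lambda>i. const p * v i) \<in> coker_rel n a"
    unfolding rel_iff
  proof (intro exI allI impI)
    fix i assume i: "i < n"
    show "const p * v i = (if i \<in> P then 0 else - const (N (a i)) * (\<Prod>k\<in>{..<n} - P - {i}. linform (a k))) * linform (a i) + Lf (a i) g"
    proof (cases "i \<in> P")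
      case True
      have e0: "N (a i) = p * (N (a i) div p)" using NP[OF True] by simp
      have "const p * const (N (a i) div p) = (const (N (a i)) :: 'v mpoly_int)"
        unfolding const_mult[symmetric] using e0[symmetric] by (rule arg_cong)
      then show ?thesis using True unfolding v_def Lg by (simp add: mult.assoc[symmetric])
    next
      case False
      then have "i \<in> {..<n} - P" using i by auto
      then have "R = linform (a i) * (\<Prod>k\<in>{..<n} - P - {i}. linform (a k))"
        unfolding R_def by (simp add: prod.remove)
      then show ?thesis using False unfolding v_def Lg by (simp add: algebra_simps)
    qed
  qed
  have nv: "v \<notin> coker_rel n a"
  proof
    assume "v \<in> coker_rel n a"
    then obtain h g' where H: "\<forall>i<n. v i = h i * linform (a i) + Lf (a i) g'" unfolding rel_iff by blast
    have lin2: "linform a2 = const \<beta> * linform a1 + const (p ^ e) * linform u"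
      unfolding linform_Lf by (rule Lf_comb) (rule u)
    have L2: "Lf a2 g' = const \<beta> * Lf a1 g' + const (p ^ e) * Lf u g'"
      by (rule Lf_comb) (rule u)
    define B where "B = h i2 * const \<beta> - const \<beta> * h i1"
    define C where "C = h i2 * linform u + Lf u g'"
    have "v i2 - const \<beta> * v i1 = (h i2 * linform a2 + Lf a2 g') - const \<beta> * (h i1 * linform a1 + Lf a1 g')"
      using H i12 unfolding a1_def a2_def by simp
    also have "\<dots> = linform a1 * B + const (p ^ e) * C"
      unfolding lin2 L2 B_def C_def by (simp add: algebra_simps)
    finally have eq1: "v i2 - const \<beta> * v i1 = linform a1 * B + const (p ^ e) * C" .
    have pe: "p ^ e = p ^ (e - 1) * p"
    proof -
      have "e = Suc (e - 1)" using e1 by simp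
      then have "p ^ e = p ^ Suc (e - 1)" by (rule arg_cong)
      then show ?thesis by (simp only: power_Suc2)
    qed
    have "N a2 div p = p ^ (e - 1) * t0" unfolding Na2 pe using pp by (simp add: prime_gt_0_int)
    then have "v i2 - const \<beta> * v i1 = const (p ^ (e - 1) * t0) * R"
      using i1P i2P unfolding v_def a1_def[symmetric] a2_def[symmetric] Na1 by simp
    then have "const (p ^ (e - 1)) * (const t0 * R - const p * C) = linform a1 * B"
      using eq1 unfolding pe by (simp add: const_mult algebra_simps)
    then have "linform a1 dvd const (p ^ (e - 1)) * (const t0 * R - const p * C)" by (simp only: dvd_triv_left)
    then have "linform a1 dvd const (p ^ (e - 1)) \<or> linform a1 dvd (const t0 * R - const p * C)"
      by (rule lin_dvd_prime[OF pa1])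
    moreover have "\<not> linform a1 dvd const (p ^ (e - 1))"
    proof
      assume "linform a1 dvd const (p ^ (e - 1))"
      then have "p ^ (e - 1) = 0" by (rule dvd_const_lin)
      then show False using p2 by simp
    qed
    ultimately obtain B2 where B2: "const t0 * R - const p * C = linform a1 * B2" by (auto simp: dvd_def)
    then have "const t0 * R = const p * C + linform a1 * B2" by (simp add: algebra_simps)
    then have "inI p (linform a1) (const t0 * R)" unfolding inI_def by blast
    then have "inI p (linform a1) (const t0) \<or> inI p (linform a1) R" by (rule lin_inI_prime[OF pa1 pp])
    moreover have "\<not> inI p (linform a1) (const t0)" using t0 inI_const by blast
    moreover have "\<not> inI p (linform a1) R"
      unfolding R_def
    proof (rule lin_inI_prod[OF pa1 pp], simp, intro ballI notI)
      fix k assume k: "k \<in> {..<n} - P" and I: "inI p (linform a1) (linform (a k))"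
      then obtain c where "\<forall>j. p dvd (a k j - c * a1 j)" using inI_lin by blast
      then have "k \<in> P" using k unfolding P_def by auto
      then show False using k by blast
    qed
    ultimately show False by blast
  qed
  show ?thesis unfolding zero_divisor_coker_def using pv nv by blast
qed


theorem proposition4p9:
  fixes n :: nat and a :: "nat \<Rightarrow> 'v::finite \<Rightarrow> int" and p :: int
  assumes nonzero: "\<forall>i<n. linform (a i) \<noteq> 0"
    and distinct_hyps: "\<forall>i<n. \<forall>k<n. i \<noteq> k \<longrightarrow> hyperplane (a i) \<noteq> hyperplane (a k)"
    and primitive: "\<forall>i<n. \<forall>q::int. prime q \<longrightarrow> \<not> const q dvd linform (a i)"
    and good: "good_prime p n a"
  shows "zero_divisor_quot p (jac_ideal n a) \<longleftrightarrow> zero_divisor_coker p n a"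
proof -
  have pp: "prime p" using good unfolding good_prime_def by blast
  have primA: "prim (a i)" if "i < n" for i using primitive that by (intro prim_of_hyp) blast
  have nz: "linform (a i) \<noteq> 0" if "i < n" for i using nonzero that by blast
  have dh: "hyperplane (a i) \<noteq> hyperplane (a k)" if "i < n" "k < n" "i \<noteq> k" for i k
    using distinct_hyps that by blast
  have ndvd: "\<not> linform (a i) dvd linform (a k)" if i: "i < n" and k: "k < n" and ik: "i \<noteq> k" for i k
  proof
    assume "linform (a i) dvd linform (a k)"
    then obtain Y where Y: "linform (a k) = linform (a i) * Y" by (auto simp: dvd_def)
    have ak: "a k j = Poly_Mapping.lookup Y 0 * a i j" for j using lin_dvd_lin[OF Y] .
    obtain j0 where j0: "a i j0 \<noteq> 0" using nonzero_coeff[OF nz[OF i]] by blast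
    have ex: "\<exists>j. a k j \<noteq> 0" using nonzero_coeff[OF nz[OF k]] .
    have minors: "a i j * a k l = a i l * a k j" for j l unfolding ak by (simp add: algebra_simps)
    have "hyperplane (a i) = hyperplane (a k)" using j0 ex minors by (rule hyp_eq)
    then show False using dh[OF i k ik] by blast
  qed
  have nQi: "\<not> linform (a i) dvd Qi n a i" if i: "i < n" for i
    unfolding Qi_def
    by (rule lin_dvd_prod[OF primA[OF i]]) (use ndvd i in auto)
  show ?thesis
  proof
    assume "zero_divisor_quot p (jac_ideal n a)"
    then obtain f where f1: "f \<notin> jac_ideal n a" and f2: "const p * f \<in> jac_ideal n a"
      unfolding zero_divisor_quot_def by blast
    show "zero_divisor_coker p n a"
    proof (cases "\<exists>i1 i2 lam. i1 < n \<and> i2 < n \<and> i1 \<noteq> i2 \<and> (\<forall>j. p dvd (a i2 j - lam * a i1 j))")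
      case True
      then obtain i1 i2 lam where c: "i1 < n" "i2 < n" "i1 \<noteq> i2" "\<forall>j. p dvd (a i2 j - lam * a i1 j)" by blast
      show ?thesis by (rule caseA[where p=p and n=n and a=a, OF pp primA nz dh c])
    next
      case False
      obtain c d where cd: "const p * f = c * defpoly n a + (\<Sum>i<n. Lf (a i) d * Qi n a i)"
        using f2 unfolding jac_iff by blast
      have inIi: "inI p (linform (a i)) (Lf (a i) d)" if i: "i < n" for i
      proof -
        obtain W where W: "(\<Sum>k\<in>{..<n} - {i}. Lf (a k) d * Qi n a k) = linform (a i) * W"
          using dvd_sum_others[OF i, where F="\<lambda>k. Lf (a k) d"] by (auto simp: dvd_def)
        have sp: "(\<Sum>k<n. Lf (a k) d * Qi n a k) = Lf (a i) d * Qi n a i + (\<Sum>k\<in>{..<n} - {i}. Lf (a k) d * Qi n a k)"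
          by (rule sum_split_at[OF i])
        have "Lf (a i) d * Qi n a i = const p * f - c * defpoly n a - (\<Sum>k\<in>{..<n} - {i}. Lf (a k) d * Qi n a k)"
          using cd sp by (simp add: algebra_simps)
        also have "\<dots> = const p * f + linform (a i) * (- c * Qi n a i - W)"
          unfolding W Q_split[OF i] by (simp add: algebra_simps)
        finally have "inI p (linform (a i)) (Lf (a i) d * Qi n a i)" unfolding inI_def by blast
        then have "inI p (linform (a i)) (Lf (a i) d) \<or> inI p (linform (a i)) (Qi n a i)"
          by (rule lin_inI_prime[OF primA[OF i] pp])
        moreover have "\<not> inI p (linform (a i)) (Qi n a i)"
          unfolding Qi_def
        proof (rule lin_inI_prod[OF primA[OF i] pp], simp, intro ballI notI)
          fix k assume k: "k \<in> {..<n} - {i}" and I: "inI p (linform (a i)) (linform (a k))"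
          obtain lam where lam: "\<forall>j. p dvd (a k j - lam * a i j)" using inI_lin[OF I] by blast
          have kn: "k < n" "i \<noteq> k" using k by auto
          have "\<exists>i1 i2 lam. i1 < n \<and> i2 < n \<and> i1 \<noteq> i2 \<and> (\<forall>j. p dvd (a i2 j - lam * a i1 j))"
            using i kn lam by blast
          then show False using False by blast
        qed
        ultimately show ?thesis by blast
      qed
      define A where "A i = (SOME A. \<exists>B. Lf (a i) d = const p * A + linform (a i) * B)" for i
      define B where "B i = (SOME B. Lf (a i) d = const p * A i + linform (a i) * B)" for i
      have AB: "Lf (a i) d = const p * A i + linform (a i) * B i" if i: "i < n" for i
      proof -
        have "\<exists>A B. Lf (a i) d = const p * A + linform (a i) * B" using inIi[OF i] unfolding inI_def .
        then have "\<exists>B. Lf (a i) d = const p * A i + linform (a i) * B" unfolding A_def by (rule someI_ex)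
        then show ?thesis unfolding B_def by (rule someI_ex)
      qed
      have pv: "(\<lambda>i. const p * A i) \<in> coker_rel n a"
        unfolding rel_iff
      proof (intro exI allI impI)
        fix i assume i: "i < n"
        show "const p * A i = (- B i) * linform (a i) + Lf (a i) d" using AB[OF i] by (simp add: algebra_simps)
      qed
      have nv: "A \<notin> coker_rel n a"
      proof
        assume "A \<in> coker_rel n a"
        then obtain h g where H: "\<forall>i<n. A i = h i * linform (a i) + Lf (a i) g" unfolding rel_iff by blast
        define d' where "d' = (\<lambda>j. d j - const p * g j)"
        have L': "Lf (a i) d' = linform (a i) * (B i + const p * h i)" if i: "i < n" for i
        proof -
          have "Lf (a i) d' = Lf (a i) d - const p * Lf (a i) g" unfolding d'_def by (rule Lf_diff)
          also have "\<dots> = linform (a i) * (B i + const p * h i)" using AB[OF i] H i by (simp add: algebra_simps)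
          finally show ?thesis .
        qed
        define E where "E = (\<Sum>i<n. B i + const p * h i)"
        define G where "G = (\<Sum>i<n. Lf (a i) g * Qi n a i)"
        have "(\<Sum>i<n. Lf (a i) d * Qi n a i) = (\<Sum>i<n. Lf (a i) d' * Qi n a i) + const p * G"
          unfolding G_def sum_distrib_left sum.distrib[symmetric]
          by (rule sum.cong[OF refl]) (simp add: d'_def Lf_diff algebra_simps)
        also have "(\<Sum>i<n. Lf (a i) d' * Qi n a i) = E * defpoly n a"
          unfolding E_def sum_distrib_right
          by (rule sum.cong[OF refl]) (simp add: L' Q_split algebra_simps)
        finally have S: "(\<Sum>i<n. Lf (a i) d * Qi n a i) = E * defpoly n a + const p * G" .
        have "const p * f = c * defpoly n a + (E * defpoly n a + const p * G)" using cd unfolding S .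
        then have eq: "(c + E) * defpoly n a = const p * (f - G)" by (simp add: algebra_simps)
        have "\<not> const p dvd defpoly n a"
          unfolding defpoly_def
        proof (rule const_p_not_dvd_prod[OF pp], simp, intro ballI)
          fix k assume "k \<in> {..<n}" then show "\<not> const p dvd linform (a k)" using primitive pp by auto
        qed
        moreover have "const p dvd (c + E) * defpoly n a" unfolding eq by simp
        ultimately have "const p dvd (c + E)" using p_prime_mult[OF pp] by blast
        then obtain t where t: "c + E = const p * t" by (auto simp: dvd_def)
        have "const p * (f - G - t * defpoly n a) = const p * (f - G) - (c + E) * defpoly n a"
          unfolding t by (simp add: algebra_simps)
        also have "\<dots> = 0" unfolding eq by simp
        finally have z: "const p * (f - G - t * defpoly n a) = 0" .
        have "p \<noteq> 0" using pp by auto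
        then have "const p \<noteq> (0 :: 'v mpoly_int)" by (simp add: const_eq_0)
        then have "f - G - t * defpoly n a = 0" using mp_no_zero_div[OF z] by blast
        then have "f = t * defpoly n a + (\<Sum>i<n. Lf (a i) g * Qi n a i)" unfolding G_def by (simp add: algebra_simps)
        then have "f \<in> jac_ideal n a" unfolding jac_iff by blast
        then show False using f1 by blast
      qed
      show ?thesis unfolding zero_divisor_coker_def using pv nv by blast
    qed
  next
    assume "zero_divisor_coker p n a"
    then obtain v where v1: "v \<notin> coker_rel n a" and v2: "(\<lambda>i. const p * v i) \<in> coker_rel n a"
      unfolding zero_divisor_coker_def by blast
    obtain h g where hg: "\<forall>i<n. const p * v i = h i * linform (a i) + Lf (a i) g"
      using v2 unfolding rel_iff by blast
    define f where "f = (\<Sum>i<n. v i * Qi n a i)"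
    have "const p * f = (\<Sum>i<n. h i) * defpoly n a + (\<Sum>i<n. Lf (a i) g * Qi n a i)"
    proof -
      have "const p * f = (\<Sum>i<n. (h i * linform (a i) + Lf (a i) g) * Qi n a i)"
        unfolding f_def sum_distrib_left by (rule sum.cong[OF refl]) (simp add: hg mult.assoc[symmetric])
      also have "\<dots> = (\<Sum>i<n. h i * defpoly n a + Lf (a i) g * Qi n a i)"
        by (rule sum.cong[OF refl]) (simp add: Q_split algebra_simps)
      also have "\<dots> = (\<Sum>i<n. h i) * defpoly n a + (\<Sum>i<n. Lf (a i) g * Qi n a i)"
        by (simp add: sum.distrib sum_distrib_right)
      finally show ?thesis .
    qed
    then have pf: "const p * f \<in> jac_ideal n a" unfolding jac_iff by blast
    have nf: "f \<notin> jac_ideal n a"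
    proof
      assume "f \<in> jac_ideal n a"
      then obtain c d where cd: "f = c * defpoly n a + (\<Sum>i<n. Lf (a i) d * Qi n a i)"
        unfolding jac_iff by blast
      have sumeq: "(\<Sum>i<n. (v i - Lf (a i) d) * Qi n a i) = c * defpoly n a"
      proof -
        have "(\<Sum>i<n. (v i - Lf (a i) d) * Qi n a i) = f - (\<Sum>i<n. Lf (a i) d * Qi n a i)"
          unfolding f_def by (simp add: sum_subtractf left_diff_distrib)
        then show ?thesis using cd by simp
      qed
      have dv: "linform (a i) dvd (v i - Lf (a i) d)" if i: "i < n" for i
      proof -
        obtain W where W: "(\<Sum>k\<in>{..<n} - {i}. (v k - Lf (a k) d) * Qi n a k) = linform (a i) * W"
          using dvd_sum_others[OF i, where F="\<lambda>k. v k - Lf (a k) d"] by (auto simp: dvd_def)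
        have sp: "(\<Sum>k<n. (v k - Lf (a k) d) * Qi n a k) = (v i - Lf (a i) d) * Qi n a i + (\<Sum>k\<in>{..<n} - {i}. (v k - Lf (a k) d) * Qi n a k)"
          by (rule sum_split_at[OF i])
        have "(v i - Lf (a i) d) * Qi n a i = c * defpoly n a - (\<Sum>k\<in>{..<n} - {i}. (v k - Lf (a k) d) * Qi n a k)"
          using sumeq sp by (simp add: algebra_simps)
        also have "\<dots> = linform (a i) * (c * Qi n a i - W)"
          unfolding W Q_split[OF i] by (simp add: algebra_simps)
        finally have "linform (a i) dvd (v i - Lf (a i) d) * Qi n a i" by (simp only: dvd_triv_left)
        then show ?thesis using lin_dvd_prime[OF primA[OF i]] nQi[OF i] by blast
      qed
      define hh where "hh i = (SOME H. v i - Lf (a i) d = linform (a i) * H)" for i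
      have "v \<in> coker_rel n a"
        unfolding rel_iff
      proof (intro exI allI impI)
        fix i assume i: "i < n"
        have "\<exists>H. v i - Lf (a i) d = linform (a i) * H" using dv[OF i] by (auto simp: dvd_def)
        then have "v i - Lf (a i) d = linform (a i) * hh i" unfolding hh_def by (rule someI_ex)
        then show "v i = hh i * linform (a i) + Lf (a i) d" by (simp add: algebra_simps)
      qed
      then show False using v1 by blast
    qed
    show "zero_divisor_quot p (jac_ideal n a)" unfolding zero_divisor_quot_def using pf nf by blast
  qed
qed

end
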